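(* Let $A$ be a Noetherian commutative ring with identity, let $A[\mathbf{x}]=A[x_1,\ldots,x_n]$ be equipped with a monomial order, let $I\subset A[\mathbf{x}]$ be an ideal, let $M=A[\mathbf{x}]/I$, and let $p\subset A$ be a prime ideal. The following two statements are equivalent: (a) the natural map $f:A_p\to M_p$ is surjective; (b) $\mathrm{in}(I)_{x_i}\,A_p=(1)$ for each $i=1,\ldots,n$.
   Context: A monomial order $>$ is a total order on monomials such that $\mathbf{x}^E>\mathbf{x}^F$ implies $\mathbf{x}^G\mathbf{x}^E>\mathbf{x}^G\mathbf{x}^F$, and $x_i>1$ for each $i$. $\mathrm{in}(f)$ is the greatest term $c\,\mathbf{x}^E$ ($c\neq0$) of a nonzero polynomial $f$; $\mathrm{in}(I)$ is the ideal generated by all $\mathrm{in}(f)$, $f\in I$. For an ideal $J\subset A[\mathbf{x}]$ and monomial $\mathbf{x}^E$, the coefficient ideal is $J_{\mathbf{x}^E}=(c\in A\mid c\,\mathbf{x}^E\in J)\subset A$; $J_{x_i}$ is the coefficient ideal for the monomial $x_i$, and $J_{x_i}A_p$ its extension to $A_p$. *)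

theory Defs
  imports Main "HOL-Library.Poly_Mapping"
begin

(* Polynomials in variables x_0,...,x_{n-1} over A: finitely supported maps
   from monomials (exponent vectors nat =>0 nat) to coefficients. *)
type_synonym 'a mpoly = "(nat \<Rightarrow>\<^sub>0 nat) \<Rightarrow>\<^sub>0 'a"

definition monoms :: "nat \<Rightarrow> (nat \<Rightarrow>\<^sub>0 nat) set" where
  "monoms n = {E. Poly_Mapping.keys E \<subseteq> {..<n}}"

definition polys :: "nat \<Rightarrow> 'a::zero mpoly set" where
  "polys n = {f. Poly_Mapping.keys f \<subseteq> monoms n}"

definition const :: "'a::zero \<Rightarrow> 'a mpoly" where
  "const c = Poly_Mapping.single 0 c"

definition term_of :: "'a::zero \<Rightarrow> (nat \<Rightarrow>\<^sub>0 nat) \<Rightarrow> 'a mpoly" where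
  "term_of c E = Poly_Mapping.single E c"

definition is_ideal_in :: "'r::comm_ring_1 set \<Rightarrow> 'r set \<Rightarrow> bool" where
  "is_ideal_in R I \<longleftrightarrow> I \<subseteq> R \<and> 0 \<in> I \<and> (\<forall>x\<in>I. \<forall>y\<in>I. x + y \<in> I)
     \<and> (\<forall>r\<in>R. \<forall>x\<in>I. r * x \<in> I)"

definition ideal_gen :: "'r::comm_ring_1 set \<Rightarrow> 'r set \<Rightarrow> 'r set" where
  "ideal_gen R S = \<Inter>{I. is_ideal_in R I \<and> S \<subseteq> I}"

definition noetherian_ring :: "'a::comm_ring_1 itself \<Rightarrow> bool" where
  "noetherian_ring _ \<longleftrightarrow>
     (\<forall>I::'a set. is_ideal_in UNIV I \<longrightarrow> (\<exists>F. finite F \<and> I = ideal_gen UNIV F))"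

definition prime_ideal :: "'a::comm_ring_1 set \<Rightarrow> bool" where
  "prime_ideal p \<longleftrightarrow> is_ideal_in UNIV p \<and> p \<noteq> UNIV
     \<and> (\<forall>a b. a * b \<in> p \<longrightarrow> a \<in> p \<or> b \<in> p)"

(* lt E F means x^E < x^F; a monomial order on monomials in n variables *)
definition monomial_order :: "nat \<Rightarrow> ((nat \<Rightarrow>\<^sub>0 nat) \<Rightarrow> (nat \<Rightarrow>\<^sub>0 nat) \<Rightarrow> bool) \<Rightarrow> bool" where
  "monomial_order n lt \<longleftrightarrow>
     (\<forall>E\<in>monoms n. \<not> lt E E)
   \<and> (\<forall>E\<in>monoms n. \<forall>F\<in>monoms n. \<forall>G\<in>monoms n. lt E F \<longrightarrow> lt F G \<longrightarrow> lt E G)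
   \<and> (\<forall>E\<in>monoms n. \<forall>F\<in>monoms n. E \<noteq> F \<longrightarrow> lt E F \<or> lt F E)
   \<and> (\<forall>E\<in>monoms n. \<forall>F\<in>monoms n. \<forall>G\<in>monoms n. lt F E \<longrightarrow> lt (G + F) (G + E))
   \<and> (\<forall>i<n. lt 0 (Poly_Mapping.single i 1))"

definition lead_monom :: "((nat \<Rightarrow>\<^sub>0 nat) \<Rightarrow> (nat \<Rightarrow>\<^sub>0 nat) \<Rightarrow> bool) \<Rightarrow> 'a::zero mpoly \<Rightarrow> (nat \<Rightarrow>\<^sub>0 nat)" where
  "lead_monom lt f = (THE E. E \<in> Poly_Mapping.keys f \<and> (\<forall>F\<in>Poly_Mapping.keys f. F \<noteq> E \<longrightarrow> lt F E))"

definition init_term :: "((nat \<Rightarrow>\<^sub>0 nat) \<Rightarrow> (nat \<Rightarrow>\<^sub>0 nat) \<Rightarrow> bool) \<Rightarrow> 'a::zero mpoly \<Rightarrow> 'a mpoly" where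
  "init_term lt f = term_of (Poly_Mapping.lookup f (lead_monom lt f)) (lead_monom lt f)"

definition init_ideal :: "nat \<Rightarrow> ((nat \<Rightarrow>\<^sub>0 nat) \<Rightarrow> (nat \<Rightarrow>\<^sub>0 nat) \<Rightarrow> bool) \<Rightarrow> 'a::comm_ring_1 mpoly set \<Rightarrow> 'a mpoly set" where
  "init_ideal n lt I = ideal_gen (polys n) {init_term lt f | f. f \<in> I \<and> f \<noteq> 0}"

(* coefficient ideal J_{x^E} = (c | c x^E in J) in A *)
definition coeff_ideal :: "'a::comm_ring_1 mpoly set \<Rightarrow> (nat \<Rightarrow>\<^sub>0 nat) \<Rightarrow> 'a set" where
  "coeff_ideal J E = ideal_gen UNIV {c. term_of c E \<in> J}"

(* Equality of fractions g/s and h/t in M_p, M = A[x]/I, S = A - p *)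
definition loc_eq_M :: "'a::comm_ring_1 mpoly set \<Rightarrow> 'a set \<Rightarrow> 'a mpoly \<times> 'a \<Rightarrow> 'a mpoly \<times> 'a \<Rightarrow> bool" where
  "loc_eq_M I p gs ht \<longleftrightarrow>
     (\<exists>u. u \<notin> p \<and> const u * (const (snd ht) * fst gs - const (snd gs) * fst ht) \<in> I)"

(* the natural map A_p -> M_p, a/s |-> [const a]/s, is surjective:
   every element g/s of M_p (g in A[x], s notin p) is the image of some a/t *)
definition nat_map_surj :: "nat \<Rightarrow> 'a::comm_ring_1 mpoly set \<Rightarrow> 'a set \<Rightarrow> bool" where
  "nat_map_surj n I p \<longleftrightarrow>
     (\<forall>g\<in>polys n. \<forall>s. s \<notin> p \<longrightarrow>
        (\<exists>a t. t \<notin> p \<and> loc_eq_M I p (g, s) (const a, t)))"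

(* J A_p = (1) for an ideal J of A: 1/1 lies in the extended ideal
   J A_p = {c/s | c in J, s notin p}, i.e. some c/s equals 1/1 in A_p *)
definition ext_unit :: "'a::comm_ring_1 set \<Rightarrow> 'a set \<Rightarrow> bool" where
  "ext_unit J p \<longleftrightarrow> (\<exists>c\<in>J. \<exists>s. s \<notin> p \<and> (\<exists>u. u \<notin> p \<and> u * (1 * c - s * 1) = 0))"

end

theory Submission
  imports Defs
begin



abbreviation X :: "nat \<Rightarrow> nat \<Rightarrow>\<^sub>0 nat" where "X i \<equiv> Poly_Mapping.single i 1"

lemma mo_irrefl: "monomial_order n lt \<Longrightarrow> E \<in> monoms n \<Longrightarrow> \<not> lt E E"
  unfolding monomial_order_def by blast
lemma mo_trans: "monomial_order n lt \<Longrightarrow> E \<in> monoms n \<Longrightarrow> F \<in> monoms n \<Longrightarrow> G \<in> monoms n \<Longrightarrow> lt E F \<Longrightarrow> lt F G \<Longrightarrow> lt E G"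
  unfolding monomial_order_def by blast
lemma mo_total: "monomial_order n lt \<Longrightarrow> E \<in> monoms n \<Longrightarrow> F \<in> monoms n \<Longrightarrow> E \<noteq> F \<Longrightarrow> lt E F \<or> lt F E"
  unfolding monomial_order_def by blast
lemma mo_mono: "monomial_order n lt \<Longrightarrow> E \<in> monoms n \<Longrightarrow> F \<in> monoms n \<Longrightarrow> G \<in> monoms n \<Longrightarrow> lt F E \<Longrightarrow> lt (G + F) (G + E)"
  unfolding monomial_order_def by blast
lemma mo_var: "monomial_order n lt \<Longrightarrow> i < n \<Longrightarrow> lt 0 (X i)"
  unfolding monomial_order_def by blast

lemma monoms_0[simp]: "0 \<in> monoms n" by (simp add: monoms_def)
lemma monoms_single: "i < n \<Longrightarrow> Poly_Mapping.single i b \<in> monoms n" by (simp add: monoms_def)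
lemma monoms_add: "E \<in> monoms n \<Longrightarrow> F \<in> monoms n \<Longrightarrow> E + F \<in> monoms n"
  unfolding monoms_def using keys_add[of E F] by auto
lemma monoms_diff: "E \<in> monoms n \<Longrightarrow> E - F \<in> monoms n"
proof -
  have "Poly_Mapping.keys (E-F) \<subseteq> Poly_Mapping.keys E" by (auto simp: in_keys_iff lookup_minus)
  then show "E \<in> monoms n \<Longrightarrow> E - F \<in> monoms n" unfolding monoms_def by blast
qed

lemma pos_add:
  assumes mo: "monomial_order n lt" and E: "E \<in> monoms n" and F: "F \<in> monoms n"
    and hE: "E = 0 \<or> lt 0 E" and hF: "F = 0 \<or> lt 0 F"
  shows "E + F = 0 \<or> lt 0 (E + F)"
proof (cases "E = 0 \<or> F = 0")
  case True then show ?thesis using hE hF by auto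
next
  case False
  then have "lt 0 E" "lt 0 F" using hE hF by auto
  have "lt (E + 0) (E + F)" by (rule mo_mono[OF mo F monoms_0 E \<open>lt 0 F\<close>])
  then have "lt E (E + F)" by simp
  then show ?thesis using mo_trans[OF mo monoms_0 E monoms_add[OF E F] \<open>lt 0 E\<close>] by simp
qed

lemma pos_single: assumes mo: "monomial_order n lt" and i: "i < n"
  shows "Poly_Mapping.single i b = 0 \<or> lt 0 (Poly_Mapping.single i b)"
proof (induction b)
  case 0 then show ?case by simp
next
  case (Suc b)
  have "Poly_Mapping.single i (Suc b) = X i + Poly_Mapping.single i b"
    by (metis plus_1_eq_Suc single_add)
  then show ?case using pos_add[OF mo monoms_single[OF i] monoms_single[OF i] _ Suc] mo_var[OF mo i] by auto
qed

lemma update_eq: "a \<notin> Poly_Mapping.keys f \<Longrightarrow> Poly_Mapping.update a b f = f + Poly_Mapping.single a b"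
  by (rule poly_mapping_eqI) (auto simp: lookup_update lookup_add lookup_single in_keys_iff)

lemma pos_monom: assumes mo: "monomial_order n lt"
  shows "E \<in> monoms n \<Longrightarrow> E = 0 \<or> lt 0 E"
proof (induction E rule: update_induct)
  case const then show ?case by simp
next
  case (update f a b)
  have ks: "Poly_Mapping.keys (Poly_Mapping.update a b f) = insert a (Poly_Mapping.keys f)"
    using update.hyps by (simp add: keys_update)
  then have a: "a < n" and f: "f \<in> monoms n" using update.prems by (auto simp: monoms_def)
  show ?case using pos_add[OF mo f monoms_single[OF a] update.IH[OF f] pos_single[OF mo a]]
    update_eq[OF update.hyps(1)] by simp
qed

lemma var_below:
  assumes mo: "monomial_order n lt" and F: "F \<in> monoms n" and k: "k \<in> Poly_Mapping.keys F"
    and i: "i < n" and lt: "lt F (X i)"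
  shows "lt (X k) (X i) \<and> k < n"
proof -
  have kn: "k < n" using F k by (auto simp: monoms_def)
  define F' where "F' = F - X k"
  have F'm: "F' \<in> monoms n" unfolding F'_def by (rule monoms_diff[OF F])
  have eq: "F = X k + F'" unfolding F'_def
    using k by (intro poly_mapping_eqI) (auto simp: lookup_add lookup_minus lookup_single in_keys_iff when_def)
  have "lt (X k) (X i)"
  proof (cases "F' = 0")
    case True then show ?thesis using eq lt by simp
  next
    case False
    then have "lt 0 F'" using pos_monom[OF mo F'm] by simp
    from mo_mono[OF mo F'm monoms_0 monoms_single[OF kn] this] have "lt (X k) F" using eq by simp
    then show ?thesis using mo_trans[OF mo monoms_single[OF kn] F monoms_single[OF i]] lt by blast
  qed
  then show ?thesis using kn by simp
qed




lemma sum_single: "f = (\<Sum>k\<in>Poly_Mapping.keys f. Poly_Mapping.single k (Poly_Mapping.lookup f k))"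
proof (rule poly_mapping_eqI)
  fix k'
  show "Poly_Mapping.lookup f k' = Poly_Mapping.lookup (\<Sum>k\<in>Poly_Mapping.keys f. Poly_Mapping.single k (Poly_Mapping.lookup f k)) k'"
    by (cases "k' \<in> Poly_Mapping.keys f") (auto simp: lookup_sum lookup_single when_def in_keys_iff)
qed

lemma lookup_single_mult:
  fixes h :: "'a::comm_ring_1 mpoly"
  shows "Poly_Mapping.lookup (Poly_Mapping.single G a * h) E =
     (if \<exists>H. E = G + H then a * Poly_Mapping.lookup h (E - G) else 0)"
proof -
  have "Poly_Mapping.single G a * h = (\<Sum>k\<in>Poly_Mapping.keys h. Poly_Mapping.single (G + k) (a * Poly_Mapping.lookup h k))"
    by (subst sum_single[of h]) (simp add: sum_distrib_left mult_single)
  then have eq: "Poly_Mapping.lookup (Poly_Mapping.single G a * h) E =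
      (\<Sum>k\<in>Poly_Mapping.keys h. (a * Poly_Mapping.lookup h k when G + k = E))"
    by (simp add: lookup_sum lookup_single)
  show ?thesis
  proof (cases "\<exists>H. E = G + H")
    case True
    then obtain H where H: "E = G + H" by blast
    have "(\<Sum>k\<in>Poly_Mapping.keys h. (a * Poly_Mapping.lookup h k when G + k = E)) =
          (\<Sum>k\<in>Poly_Mapping.keys h. (a * Poly_Mapping.lookup h k when k = H))"
      using H by (intro sum.cong) (auto simp: when_def)
    also have "\<dots> = a * Poly_Mapping.lookup h H"
      by (cases "H \<in> Poly_Mapping.keys h") (auto simp: when_def in_keys_iff)
    finally show ?thesis using eq H True by simp
  next
    case False
    then have "(\<Sum>k\<in>Poly_Mapping.keys h. (a * Poly_Mapping.lookup h k when G + k = E)) = 0"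
      by (intro sum.neutral) (auto simp: when_def)
    then show ?thesis using eq False by simp
  qed
qed

lemma const_mult: "const (a * b) = const a * const (b::'a::comm_ring_1)"
  by (simp add: const_def mult_single)
lemma const_add: "const (a + b) = const a + const (b::'a::comm_ring_1)"
  by (simp add: const_def single_add)
lemma const_diff: "const (a - b) = const a - const (b::'a::comm_ring_1)"
  by (simp add: const_def single_diff)
lemma const_uminus: "const (- b) = - const (b::'a::comm_ring_1)"
  by (simp add: const_def single_uminus)
lemma const_1[simp]: "const 1 = (1::'a::comm_ring_1 mpoly)"
  by (simp add: const_def)
lemma const_0[simp]: "const 0 = (0::'a::comm_ring_1 mpoly)"
  by (simp add: const_def)

lemma polys_single: "E \<in> monoms n \<Longrightarrow> Poly_Mapping.single E c \<in> polys n"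
  by (simp add: polys_def)
lemma polys_const: "const c \<in> polys n"
  by (simp add: const_def polys_single)
lemma polys_add: "f \<in> polys n \<Longrightarrow> g \<in> polys n \<Longrightarrow> f + g \<in> polys n"
  unfolding polys_def using keys_add[of f g] by auto
lemma polys_uminus: "f \<in> polys n \<Longrightarrow> - (f::'a::comm_ring_1 mpoly) \<in> polys n"
  unfolding polys_def by (simp add: keys_minus)
lemma polys_diff: "f \<in> polys n \<Longrightarrow> g \<in> polys n \<Longrightarrow> f - (g::'a::comm_ring_1 mpoly) \<in> polys n"
  using polys_add[OF _ polys_uminus] by (metis diff_conv_add_uminus)
lemma polys_mult: "f \<in> polys n \<Longrightarrow> g \<in> polys n \<Longrightarrow> f * (g::'a::comm_ring_1 mpoly) \<in> polys n"
  unfolding polys_def using keys_mult[of f g] monoms_add by blast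
lemma polys_sum: "(\<And>k. k \<in> K \<Longrightarrow> f k \<in> polys n) \<Longrightarrow> sum f K \<in> polys n"
proof -
  have z: "0 \<in> polys n" by (simp add: polys_def)
  show "(\<And>k. k \<in> K \<Longrightarrow> f k \<in> polys n) \<Longrightarrow> sum f K \<in> polys n"
    by (induction K rule: infinite_finite_induct) (auto simp: z intro: polys_add)
qed

lemma idl_sub: "is_ideal_in R I \<Longrightarrow> x \<in> I \<Longrightarrow> x \<in> R"
  unfolding is_ideal_in_def by blast
lemma idl_0: "is_ideal_in R I \<Longrightarrow> 0 \<in> I"
  unfolding is_ideal_in_def by blast
lemma idl_add: "is_ideal_in R I \<Longrightarrow> x \<in> I \<Longrightarrow> y \<in> I \<Longrightarrow> x + y \<in> I"
  unfolding is_ideal_in_def by blast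
lemma idl_mult: "is_ideal_in R I \<Longrightarrow> r \<in> R \<Longrightarrow> x \<in> I \<Longrightarrow> r * x \<in> I"
  unfolding is_ideal_in_def by blast

lemma I_comb: assumes "is_ideal_in (polys n) I" "x \<in> I" "y \<in> I" "r \<in> polys n" "s \<in> polys n"
  shows "r * x + s * (y::'a::comm_ring_1 mpoly) \<in> I"
  using assms idl_add idl_mult by blast

lemma I_diff: assumes "is_ideal_in (polys n) I" "x \<in> I" "y \<in> I"
  shows "x - (y::'a::comm_ring_1 mpoly) \<in> I"
proof -
  have "const 1 * x + const (-1) * y \<in> I" by (rule I_comb[OF assms polys_const polys_const])
  then show ?thesis by (simp add: const_uminus)
qed




definition good :: "nat \<Rightarrow> 'a::comm_ring_1 mpoly set \<Rightarrow> 'a set \<Rightarrow> 'a mpoly \<Rightarrow> bool" where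
  "good n I p g \<longleftrightarrow> g \<in> polys n \<and> (\<exists>a t u. t \<notin> p \<and> u \<notin> p \<and> const u * (g * const t - const a) \<in> I)"

lemma prime_mult: "prime_ideal p \<Longrightarrow> s \<notin> p \<Longrightarrow> t \<notin> p \<Longrightarrow> s * t \<notin> p"
  unfolding prime_ideal_def by blast
lemma prime_1: "prime_ideal p \<Longrightarrow> 1 \<notin> p"
  unfolding prime_ideal_def is_ideal_in_def by (metis UNIV_I mult.right_neutral subsetI subset_antisym)
lemma prime_mem_mult: "prime_ideal p \<Longrightarrow> c \<in> p \<Longrightarrow> r * c \<in> p"
  unfolding prime_ideal_def is_ideal_in_def by blast

context
  fixes n :: nat and I :: "'a::comm_ring_1 mpoly set" and p :: "'a set"
  assumes Iid: "is_ideal_in (polys n) I" and pp: "prime_ideal p"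
begin

lemma good_const: "good n I p (const c)"
  unfolding good_def using polys_const idl_0[OF Iid] prime_1[OF pp]
  by (intro conjI exI[of _ c] exI[of _ 1]) auto

lemma good_mult: assumes "good n I p g1" "good n I p g2" shows "good n I p (g1 * g2)"
proof -
  obtain a1 t1 u1 where 1: "t1 \<notin> p" "u1 \<notin> p" "const u1 * (g1 * const t1 - const a1) \<in> I" "g1 \<in> polys n"
    using assms(1) unfolding good_def by blast
  obtain a2 t2 u2 where 2: "t2 \<notin> p" "u2 \<notin> p" "const u2 * (g2 * const t2 - const a2) \<in> I" "g2 \<in> polys n"
    using assms(2) unfolding good_def by blast
  have eq: "const (u1*u2) * (g1 * g2 * const (t1*t2) - const (a1*a2)) =
     (const u2 * g2 * const t2) * (const u1 * (g1 * const t1 - const a1)) + (const u1 * const a1) * (const u2 * (g2 * const t2 - const a2))"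
    by (simp add: const_mult algebra_simps)
  have "const (u1*u2) * (g1 * g2 * const (t1*t2) - const (a1*a2)) \<in> I"
    unfolding eq by (rule I_comb[OF Iid 1(3) 2(3)]) (intro polys_mult polys_const 2(4))+
  then show ?thesis unfolding good_def using 1 2 prime_mult[OF pp] polys_mult by blast
qed

lemma good_add: assumes "good n I p g1" "good n I p g2" shows "good n I p (g1 + g2)"
proof -
  obtain a1 t1 u1 where 1: "t1 \<notin> p" "u1 \<notin> p" "const u1 * (g1 * const t1 - const a1) \<in> I" "g1 \<in> polys n"
    using assms(1) unfolding good_def by blast
  obtain a2 t2 u2 where 2: "t2 \<notin> p" "u2 \<notin> p" "const u2 * (g2 * const t2 - const a2) \<in> I" "g2 \<in> polys n"
    using assms(2) unfolding good_def by blast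
  have eq: "const (u1*u2) * ((g1 + g2) * const (t1*t2) - const (a1*t2 + a2*t1)) =
     (const u2 * const t2) * (const u1 * (g1 * const t1 - const a1)) + (const u1 * const t1) * (const u2 * (g2 * const t2 - const a2))"
    by (simp add: const_mult const_add algebra_simps)
  have "const (u1*u2) * ((g1 + g2) * const (t1*t2) - const (a1*t2 + a2*t1)) \<in> I"
    unfolding eq by (rule I_comb[OF Iid 1(3) 2(3)]) (intro polys_mult polys_const)+
  then show ?thesis unfolding good_def using 1 2 prime_mult[OF pp] polys_add by blast
qed

lemma good_sum: "(\<And>k. k \<in> K \<Longrightarrow> good n I p (f k)) \<Longrightarrow> good n I p (sum f K)"
  using good_const[of 0]
  by (induction K rule: infinite_finite_induct) (auto intro: good_add)

lemma good_power: "good n I p g \<Longrightarrow> good n I p (g ^ b)"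
  using good_const[of 1] by (induction b) (auto intro: good_mult)

lemma single_add_key: "Poly_Mapping.single (A + B) (1::'a) = Poly_Mapping.single A 1 * Poly_Mapping.single B 1"
  by (simp add: mult_single)

lemma single_var_power: "Poly_Mapping.single (Poly_Mapping.single a b) (1::'a) = (Poly_Mapping.single (X a) 1) ^ b"
proof (induction b)
  case 0 then show ?case by simp
next
  case (Suc b)
  have "Poly_Mapping.single a (Suc b) = X a + Poly_Mapping.single a b"
    by (metis plus_1_eq_Suc single_add)
  then show ?case using Suc by (simp only: single_add_key power_Suc)
qed

lemma good_monom: "(\<And>k. k \<in> Poly_Mapping.keys E \<Longrightarrow> good n I p (Poly_Mapping.single (X k) 1)) \<Longrightarrow>
   good n I p (Poly_Mapping.single E 1)"
proof (induction E rule: update_induct)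
  case const then show ?case using good_const[of 1] by simp
next
  case (update f a b)
  have ks: "Poly_Mapping.keys (Poly_Mapping.update a b f) = insert a (Poly_Mapping.keys f)"
    using update.hyps by (simp add: keys_update)
  have "Poly_Mapping.single (Poly_Mapping.update a b f) (1::'a) = Poly_Mapping.single f 1 * (Poly_Mapping.single (X a) 1) ^ b"
    using update_eq[OF update.hyps(1)] single_var_power[of a b] by (simp only: single_add_key)
  then show ?case using update.IH update.prems ks by (auto intro!: good_mult good_power)
qed

lemma good_poly: "g \<in> polys n \<Longrightarrow> (\<And>E k. E \<in> Poly_Mapping.keys g \<Longrightarrow> k \<in> Poly_Mapping.keys E \<Longrightarrow> good n I p (Poly_Mapping.single (X k) 1)) \<Longrightarrow>
   good n I p g"
proof -
  assume h: "\<And>E k. E \<in> Poly_Mapping.keys g \<Longrightarrow> k \<in> Poly_Mapping.keys E \<Longrightarrow> good n I p (Poly_Mapping.single (X k) 1)"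
  have "good n I p (\<Sum>E\<in>Poly_Mapping.keys g. Poly_Mapping.single E (Poly_Mapping.lookup g E))"
  proof (rule good_sum)
    fix E assume E: "E \<in> Poly_Mapping.keys g"
    have "Poly_Mapping.single E (Poly_Mapping.lookup g E) = const (Poly_Mapping.lookup g E) * Poly_Mapping.single E 1"
      by (simp add: const_def mult_single)
    then show "good n I p (Poly_Mapping.single E (Poly_Mapping.lookup g E))"
      using good_mult[OF good_const good_monom[OF h[OF E]]] by simp
  qed
  then show ?thesis using sum_single[of g] by simp
qed

end



lemma max_exists:
  assumes mo: "monomial_order n lt"
  shows "finite A \<Longrightarrow> A \<noteq> {} \<Longrightarrow> A \<subseteq> monoms n \<Longrightarrow> \<exists>E\<in>A. \<forall>F\<in>A. F \<noteq> E \<longrightarrow> lt F E"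
proof (induction A rule: finite_ne_induct)
  case (singleton x) then show ?case by simp
next
  case (insert x A)
  then obtain E where E: "E \<in> A" "\<forall>F\<in>A. F \<noteq> E \<longrightarrow> lt F E" by auto
  have xm: "x \<in> monoms n" and Am: "A \<subseteq> monoms n" using insert.prems by auto
  show ?case
  proof (cases "lt E x")
    case True
    have "\<forall>F\<in>insert x A. F \<noteq> x \<longrightarrow> lt F x"
      using E True mo_trans[OF mo _ _ xm] Am by (metis insertE subsetD)
    then show ?thesis by blast
  next
    case False
    then have "x = E \<or> lt x E" using mo_total[OF mo xm, of E] Am E(1) by blast
    then show ?thesis using E by blast
  qed
qed

lemma lead_monom_eq:
  assumes mo: "monomial_order n lt" and f: "f \<in> polys n" and E: "E \<in> Poly_Mapping.keys f"
    and mx: "\<forall>F\<in>Poly_Mapping.keys f. F \<noteq> E \<longrightarrow> lt F E"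
  shows "lead_monom lt f = E"
  unfolding lead_monom_def
proof (rule the_equality)
  show "E \<in> Poly_Mapping.keys f \<and> (\<forall>F\<in>Poly_Mapping.keys f. F \<noteq> E \<longrightarrow> lt F E)" using E mx by blast
next
  fix E' assume h: "E' \<in> Poly_Mapping.keys f \<and> (\<forall>F\<in>Poly_Mapping.keys f. F \<noteq> E' \<longrightarrow> lt F E')"
  have km: "Poly_Mapping.keys f \<subseteq> monoms n" using f by (simp add: polys_def)
  show "E' = E"
  proof (rule ccontr)
    assume ne: "E' \<noteq> E"
    then have "lt E' E" "lt E E'" using h mx E by auto
    then show False using mo_trans[OF mo, of E E' E] mo_irrefl[OF mo, of E] km E h by blast
  qed
qed

lemma lead_exists:
  assumes mo: "monomial_order n lt" and f: "f \<in> polys n" and nz: "f \<noteq> 0"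
  shows "\<exists>E\<in>Poly_Mapping.keys f. (\<forall>F\<in>Poly_Mapping.keys f. F \<noteq> E \<longrightarrow> lt F E) \<and> lead_monom lt f = E"
proof -
  have "Poly_Mapping.keys f \<noteq> {}" using nz by simp
  then obtain E where "E\<in>Poly_Mapping.keys f" "\<forall>F\<in>Poly_Mapping.keys f. F \<noteq> E \<longrightarrow> lt F E"
    using max_exists[OF mo finite_keys, of f] f by (auto simp: polys_def)
  then show ?thesis using lead_monom_eq[OF mo f] by blast
qed

definition W :: "nat \<Rightarrow> _ \<Rightarrow> 'a::comm_ring_1 mpoly set \<Rightarrow> (nat \<Rightarrow>\<^sub>0 nat) \<Rightarrow> 'a \<Rightarrow> bool" where
  "W n lt I E c \<longleftrightarrow> (\<exists>f\<in>I. Poly_Mapping.lookup f E = c \<and> (\<forall>F\<in>Poly_Mapping.keys f. F = E \<or> lt F E))"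

context
  fixes n :: nat and I :: "'a::comm_ring_1 mpoly set" and lt
  assumes Iid: "is_ideal_in (polys n) I" and mo: "monomial_order n lt"
begin

lemma W_0: "W n lt I E 0"
  unfolding W_def using idl_0[OF Iid] by (intro bexI[of _ 0]) auto

lemma W_add: "W n lt I E c1 \<Longrightarrow> W n lt I E c2 \<Longrightarrow> W n lt I E (c1 + c2)"
  unfolding W_def
proof (elim bexE conjE)
  fix f1 f2 assume "f1 \<in> I" "f2 \<in> I" "Poly_Mapping.lookup f1 E = c1" "Poly_Mapping.lookup f2 E = c2"
    "\<forall>F\<in>Poly_Mapping.keys f1. F = E \<or> lt F E" "\<forall>F\<in>Poly_Mapping.keys f2. F = E \<or> lt F E"
  then show "\<exists>f\<in>I. Poly_Mapping.lookup f E = c1 + c2 \<and> (\<forall>F\<in>Poly_Mapping.keys f. F = E \<or> lt F E)"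
    using idl_add[OF Iid] keys_add[of f1 f2]
    by (intro bexI[of _ "f1 + f2"]) (auto simp: lookup_add)
qed

lemma W_mult: assumes G: "G \<in> monoms n" and E: "E \<in> monoms n" and w: "W n lt I E c"
  shows "W n lt I (G + E) (a * c)"
proof -
  obtain f where f: "f \<in> I" "Poly_Mapping.lookup f E = c" "\<forall>F\<in>Poly_Mapping.keys f. F = E \<or> lt F E"
    using w unfolding W_def by blast
  have fp: "f \<in> polys n" using idl_sub[OF Iid f(1)] .
  have inI: "Poly_Mapping.single G a * f \<in> I" using idl_mult[OF Iid polys_single[OF G] f(1)] .
  have lk: "Poly_Mapping.lookup (Poly_Mapping.single G a * f) (G + E) = a * c"
    using f(2) by (subst lookup_single_mult) auto
  have "\<forall>F\<in>Poly_Mapping.keys (Poly_Mapping.single G a * f). F = G + E \<or> lt F (G + E)"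
  proof
    fix F assume "F \<in> Poly_Mapping.keys (Poly_Mapping.single G a * f)"
    then obtain F0 where F0: "F0 \<in> Poly_Mapping.keys f" "F = G + F0"
      using keys_mult[of "Poly_Mapping.single G a" f] by (auto split: if_splits)
    have "F0 \<in> monoms n" using fp F0(1) by (auto simp: polys_def)
    then show "F = G + E \<or> lt F (G + E)" using f(3) F0 mo_mono[OF mo E _ G, of F0] by (cases "F0 = E") auto
  qed
  then show ?thesis unfolding W_def using inI lk by blast
qed

definition K :: "'a mpoly set" where
  "K = {h \<in> polys n. \<forall>E\<in>monoms n. W n lt I E (Poly_Mapping.lookup h E)}"

lemma K_0: "0 \<in> K" unfolding K_def using W_0 by (auto simp: polys_def)

lemma K_add: "h1 \<in> K \<Longrightarrow> h2 \<in> K \<Longrightarrow> h1 + h2 \<in> K"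
  unfolding K_def using W_add polys_add by (auto simp: lookup_add)

lemma K_single_mult: assumes G: "G \<in> monoms n" and h: "h \<in> K"
  shows "Poly_Mapping.single G a * h \<in> K"
proof -
  have hp: "h \<in> polys n" using h by (simp add: K_def)
  have "\<forall>E\<in>monoms n. W n lt I E (Poly_Mapping.lookup (Poly_Mapping.single G a * h) E)"
  proof
    fix E assume E: "E \<in> monoms n"
    show "W n lt I E (Poly_Mapping.lookup (Poly_Mapping.single G a * h) E)"
    proof (cases "\<exists>H. E = G + H")
      case True
      then obtain H where H: "E = G + H" by blast
      have Hm: "H \<in> monoms n" using monoms_diff[OF E, of G] H by simp
      have "W n lt I H (Poly_Mapping.lookup h H)" using h Hm by (simp add: K_def)
      from W_mult[OF G Hm this, of a] show ?thesis using H by (simp add: lookup_single_mult)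
    next
      case False then show ?thesis using W_0 by (simp add: lookup_single_mult)
    qed
  qed
  then show ?thesis unfolding K_def using polys_mult[OF polys_single[OF G] hp] by blast
qed

lemma K_sum: "(\<And>k. k \<in> S \<Longrightarrow> g k \<in> K) \<Longrightarrow> sum g S \<in> K"
  using K_0 by (induction S rule: infinite_finite_induct) (auto intro: K_add)

lemma K_mult: assumes r: "r \<in> polys n" and h: "h \<in> K" shows "r * h \<in> K"
proof -
  have "r * h = (\<Sum>G\<in>Poly_Mapping.keys r. Poly_Mapping.single G (Poly_Mapping.lookup r G) * h)"
    by (subst sum_single[of r]) (simp add: sum_distrib_right)
  also have "\<dots> \<in> K"
    using r by (intro K_sum K_single_mult h) (auto simp: polys_def)
  finally show ?thesis .
qed

lemma K_ideal: "is_ideal_in (polys n) K"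
  unfolding is_ideal_in_def using K_0 K_add K_mult by (auto simp: K_def)

lemma K_gen: assumes f: "f \<in> I" "f \<noteq> 0" shows "init_term lt f \<in> K"
proof -
  have fp: "f \<in> polys n" using idl_sub[OF Iid f(1)] .
  obtain E0 where E0: "E0 \<in> Poly_Mapping.keys f" "\<forall>F\<in>Poly_Mapping.keys f. F \<noteq> E0 \<longrightarrow> lt F E0" "lead_monom lt f = E0"
    using lead_exists[OF mo fp f(2)] by blast
  have it: "init_term lt f = Poly_Mapping.single E0 (Poly_Mapping.lookup f E0)"
    by (simp add: init_term_def term_of_def E0(3))
  have E0m: "E0 \<in> monoms n" using fp E0(1) by (auto simp: polys_def)
  have "\<forall>E\<in>monoms n. W n lt I E (Poly_Mapping.lookup (init_term lt f) E)"
  proof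
    fix E assume "E \<in> monoms n"
    show "W n lt I E (Poly_Mapping.lookup (init_term lt f) E)"
    proof (cases "E = E0")
      case True
      then show ?thesis unfolding it W_def using f(1) E0(2) by auto
    next
      case False then show ?thesis unfolding it using W_0 by (simp add: lookup_single)
    qed
  qed
  then show ?thesis unfolding K_def it using polys_single[OF E0m] by auto
qed

lemma init_ideal_sub_K: "init_ideal n lt I \<subseteq> K"
  unfolding init_ideal_def ideal_gen_def using K_ideal K_gen by blast

lemma coeff_ideal_W: assumes i: "i < n" and c: "c \<in> coeff_ideal (init_ideal n lt I) (X i)"
  shows "W n lt I (X i) c"
proof -
  let ?C = "{c. W n lt I (X i) c}"
  have Cid: "is_ideal_in UNIV ?C"
    unfolding is_ideal_in_def using W_0 W_add W_mult[OF monoms_0 monoms_single[OF i]] by auto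
  have "{c. term_of c (X i) \<in> init_ideal n lt I} \<subseteq> ?C"
  proof
    fix c assume "c \<in> {c. term_of c (X i) \<in> init_ideal n lt I}"
    then have "term_of c (X i) \<in> K" using init_ideal_sub_K by auto
    then have "\<forall>E\<in>monoms n. W n lt I E (Poly_Mapping.lookup (term_of c (X i)) E)" by (simp add: K_def)
    then have "W n lt I (X i) (Poly_Mapping.lookup (term_of c (X i)) (X i))" using monoms_single[OF i] by blast
    then show "c \<in> ?C" by (simp add: term_of_def)
  qed
  then show ?thesis using c Cid unfolding coeff_ideal_def ideal_gen_def by blast
qed

end



lemma gen_sub: "S \<subseteq> ideal_gen R S" unfolding ideal_gen_def by blast

theorem proposition5p1:
  fixes n :: nat
    and lt :: "(nat \<Rightarrow>\<^sub>0 nat) \<Rightarrow> (nat \<Rightarrow>\<^sub>0 nat) \<Rightarrow> bool"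
    and I :: "'a::comm_ring_1 mpoly set"
    and p :: "'a set"
  assumes "noetherian_ring TYPE('a)"
    and "monomial_order n lt"
    and "is_ideal_in (polys n) I"
    and "prime_ideal p"
  shows "nat_map_surj n I p \<longleftrightarrow>
         (\<forall>i<n. ext_unit (coeff_ideal (init_ideal n lt I) (Poly_Mapping.single i 1)) p)"
proof
  note mo = assms(2) and Iid = assms(3) and pp = assms(4)
  have p0: "0 \<in> p" using pp unfolding prime_ideal_def is_ideal_in_def by blast
  assume surj: "nat_map_surj n I p"
  show "\<forall>i<n. ext_unit (coeff_ideal (init_ideal n lt I) (X i)) p"
  proof (intro allI impI)
    fix i assume i: "i < n"
    let ?Xp = "Poly_Mapping.single (X i) (1::'a)"
    have Xp: "?Xp \<in> polys n" using polys_single[OF monoms_single[OF i]] .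
    obtain a t u where tu: "t \<notin> p" "u \<notin> p" and P: "const u * (const t * ?Xp - const 1 * const a) \<in> I"
      using surj Xp prime_1[OF pp] unfolding nat_map_surj_def loc_eq_M_def by fastforce
    define P where "P = const u * (const t * ?Xp - const 1 * const a)"
    have Peq: "P = Poly_Mapping.single (X i) (u * t) - Poly_Mapping.single 0 (u * a)"
      unfolding P_def const_def by (simp add: algebra_simps mult_single)
    have ut: "u * t \<notin> p" using prime_mult[OF pp tu(2) tu(1)] .
    then have utnz: "u * t \<noteq> 0" using p0 by auto
    have Xne: "X i \<noteq> 0" by (metis lookup_single_eq lookup_zero one_neq_zero)
    have lkX: "Poly_Mapping.lookup P (X i) = u * t"
      unfolding Peq using Xne by (simp add: lookup_minus lookup_single when_def)
    have keysP: "Poly_Mapping.keys P \<subseteq> {X i, 0}"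
      unfolding Peq by (auto simp: in_keys_iff lookup_minus lookup_single when_def split: if_splits)
    have XinP: "X i \<in> Poly_Mapping.keys P" using lkX utnz by (simp add: in_keys_iff)
    have PI: "P \<in> I" using P P_def by simp
    have Pp: "P \<in> polys n" using idl_sub[OF Iid PI] .
    have "lead_monom lt P = X i"
      using lead_monom_eq[OF mo Pp XinP] keysP mo_var[OF mo i] by blast
    then have "init_term lt P = term_of (u * t) (X i)"
      using lkX by (simp add: init_term_def)
    moreover have "P \<noteq> 0" using XinP by auto
    ultimately have "term_of (u * t) (X i) \<in> {init_term lt f | f. f \<in> I \<and> f \<noteq> 0}"
      using PI by force
    then have "term_of (u * t) (X i) \<in> init_ideal n lt I"
      unfolding init_ideal_def using gen_sub by (rule subsetD[rotated])
    then have "u * t \<in> {c. term_of c (X i) \<in> init_ideal n lt I}" by simp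
    then have "u * t \<in> coeff_ideal (init_ideal n lt I) (X i)"
      unfolding coeff_ideal_def using gen_sub by (rule subsetD[rotated])
    then show "ext_unit (coeff_ideal (init_ideal n lt I) (X i)) p"
      unfolding ext_unit_def using ut prime_1[OF pp] by (intro bexI[of _ "u*t"] exI[of _ "u*t"] conjI exI[of _ 1]) auto
  qed
next
  note mo = assms(2) and Iid = assms(3) and pp = assms(4)
  assume ext: "\<forall>i<n. ext_unit (coeff_ideal (init_ideal n lt I) (X i)) p"
  have goodX: "i < n \<longrightarrow> good n I p (Poly_Mapping.single (X i) 1)" for i
  proof (induction i rule: measure_induct_rule[of "\<lambda>i. card {k. k < n \<and> lt (X k) (X i)}"])
    case (less i)
    show ?case
    proof
      assume i: "i < n"
      have IH: "good n I p (Poly_Mapping.single (X k) 1)" if k: "k < n" "lt (X k) (X i)" for k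
      proof -
        have "{k'. k' < n \<and> lt (X k') (X k)} \<subset> {k'. k' < n \<and> lt (X k') (X i)}"
        proof
          show "{k'. k' < n \<and> lt (X k') (X k)} \<subseteq> {k'. k' < n \<and> lt (X k') (X i)}"
            using mo_trans[OF mo monoms_single monoms_single[OF k(1)] monoms_single[OF i]] k by auto
          show "{k'. k' < n \<and> lt (X k') (X k)} \<noteq> {k'. k' < n \<and> lt (X k') (X i)}"
            using k mo_irrefl[OF mo monoms_single[OF k(1)]] by blast
        qed
        then have "card {k'. k' < n \<and> lt (X k') (X k)} < card {k'. k' < n \<and> lt (X k') (X i)}"
          by (intro psubset_card_mono) auto
        then show ?thesis using less k by blast
      qed
      obtain c s u where c: "c \<in> coeff_ideal (init_ideal n lt I) (X i)" and su: "s \<notin> p" "u \<notin> p"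
        and cu: "u * (1 * c - s * 1) = 0"
        using ext i unfolding ext_unit_def by blast
      have "u * c = u * s" using cu by (simp add: algebra_simps)
      then have cp: "c \<notin> p" using prime_mult[OF pp su(2) su(1)] prime_mem_mult[OF pp, of c u] by auto
      obtain f where f: "f \<in> I" "Poly_Mapping.lookup f (X i) = c" "\<forall>F\<in>Poly_Mapping.keys f. F = X i \<or> lt F (X i)"
        using coeff_ideal_W[OF Iid mo i c] unfolding W_def by blast
      have fp: "f \<in> polys n" using idl_sub[OF Iid f(1)] .
      let ?Xp = "Poly_Mapping.single (X i) (1::'a)"
      have Xp: "?Xp \<in> polys n" using polys_single[OF monoms_single[OF i]] .
      define r where "r = f - Poly_Mapping.single (X i) c"
      have rp: "r \<in> polys n" unfolding r_def by (intro polys_diff fp polys_single monoms_single i)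
      have keys_r: "E \<in> Poly_Mapping.keys f \<and> E \<noteq> X i" if "E \<in> Poly_Mapping.keys r" for E
        using that f(2) unfolding r_def by (auto simp: in_keys_iff lookup_minus lookup_single when_def split: if_splits)
      have "good n I p r"
      proof (rule good_poly[OF Iid pp rp])
        fix E k assume E: "E \<in> Poly_Mapping.keys r" and k: "k \<in> Poly_Mapping.keys E"
        have Ef: "E \<in> Poly_Mapping.keys f" "E \<noteq> X i" using keys_r[OF E] by auto
        then have "lt E (X i)" using f(3) by blast
        moreover have "E \<in> monoms n" using fp Ef by (auto simp: polys_def)
        ultimately have "lt (X k) (X i) \<and> k < n" using var_below[OF mo _ k i] by blast
        then show "good n I p (Poly_Mapping.single (X k) 1)" using IH by blast
      qed
      then obtain a t u' where tu: "t \<notin> p" "u' \<notin> p" and rI: "const u' * (r * const t - const a) \<in> I"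
        unfolding good_def by blast
      have feq: "f = r + const c * ?Xp" unfolding r_def const_def by (simp add: mult_single)
      have eq: "const u' * (?Xp * const (c * t) - const (- a)) = (const u' * const t) * f - const u' * (r * const t - const a)"
        unfolding feq by (simp add: const_mult const_uminus algebra_simps)
      have "(const u' * const t) * f \<in> I" by (intro idl_mult[OF Iid] f(1) polys_mult polys_const)
      then have "const u' * (?Xp * const (c * t) - const (- a)) \<in> I"
        unfolding eq using I_diff[OF Iid _ rI] by blast
      then show "good n I p ?Xp" unfolding good_def
        using Xp prime_mult[OF pp cp tu(1)] tu(2) by blast
    qed
  qed
  show "nat_map_surj n I p"
    unfolding nat_map_surj_def
  proof (intro ballI allI impI)
    fix g :: "'a mpoly" and s :: 'a assume g: "g \<in> polys n" and s: "s \<notin> p"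
    have "good n I p g"
    proof (rule good_poly[OF Iid pp g])
      fix E k assume "E \<in> Poly_Mapping.keys g" "k \<in> Poly_Mapping.keys E"
      then have "k < n" using g by (auto simp: polys_def monoms_def)
      then show "good n I p (Poly_Mapping.single (X k) 1)" using goodX by blast
    qed
    then obtain a t u where tu: "t \<notin> p" "u \<notin> p" and gI: "const u * (g * const t - const a) \<in> I"
      unfolding good_def by blast
    have eq: "const u * (const (t * s) * g - const s * const a) = const s * (const u * (g * const t - const a))"
      by (simp add: const_mult algebra_simps)
    have "const u * (const (t * s) * g - const s * const a) \<in> I"
      unfolding eq by (rule idl_mult[OF Iid polys_const gI])
    then show "\<exists>a t. t \<notin> p \<and> loc_eq_M I p (g, s) (const a, t)"
      unfolding loc_eq_M_def using tu prime_mult[OF pp tu(1) s] by auto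
  qed
qed


end
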